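(* Let $\sigma\subseteq E_0$ be a reasonable strategy of player $0$ in the escape arena $\mathcal{A}_\bot$. Define $\mathcal{V}_\bot:V\cup\{\bot\}\to\mathcal{P}$ by $\mathcal{V}_\bot(\bot)=\text{\o}$ and $\mathcal{V}_\bot(s)=\infty$ for $s\in V$, and the operator $F_\sigma$ on maps $\mathcal{V}:V\cup\{\bot\}\to\mathcal{P}$ by $F_\sigma[\mathcal{V}](\bot)=\text{\o}$, $F_\sigma[\mathcal{V}](s)=\wp(s)+\min^{\preceq}\{\mathcal{V}(t)\mid (s,t)\in E_1\}$ if $s\in V_1$, and $F_\sigma[\mathcal{V}](s)=\wp(s)+\max^{\preceq}\{\mathcal{V}(t)\mid (s,t)\in\sigma\}$ if $s\in V_0$. Then the valuation $\mathcal{V}_\sigma$ is the limit of the sequence $F_\sigma^i[\mathcal{V}_\bot]$ as $i\to\infty$, and this limit is reached after at most $|V|$ iterations.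
   Context: Parity game arena: $\mathcal{A}=(V,E,o,c)$ with $V$ finite, $E\subseteq V\times V$, every vertex has a successor, owner map $o:V\to\{0,1\}$, colouring $c:V\to\{0,\dots,d-1\}$; $V_i=o^{-1}(i)$. An infinite vertex sequence is won by player $0$ iff the largest colour occurring infinitely often is even. A cycle is $i$-dominated if its largest colour has parity $i$. Escape arena $\mathcal{A}_\bot$: vertices $V\cup\{\bot\}$, edges $E\cup(V_0\times\{\bot\})$, $\bot$ owned by player $0$ with no outgoing edges. $E_0$ = edges of $\mathcal{A}_\bot$ leaving $V_0$, $E_1=E\cap(V_1\times V)$. A strategy of player $i$ is a set $\sigma\subseteq E_i$ with $s\sigma\neq\emptyset$ for all $s\in V_i$. $\mathcal{A}_\bot|_{\sigma,\tau}$ has edges $\sigma\cup\tau$, $\mathcal{A}_\bot|_\sigma$ has edges $\sigma\cup E_1$; plays are maximal paths (infinite or ending in $\bot$). Colour profiles $\mathcal{P}=\mathbb{Z}^d\cup\{-\infty,\infty\}$, $\text{\o}$ zero vector; $\wp(s)$ unit vector at coordinate $c(s)$; for a finite path the sum over vertices in $V$; infinite play: $\infty$ if won by player $0$, else $-\infty$. Addition componentwise, $x+\pm\infty=\pm\infty$. Order $\prec$: $-\infty$ least, $\infty$ greatest; for distinct $p,p'\in\mathbb{Z}^d$ with $k$ the largest differing index, $p\prec p'$ iff ($k$ even, $p_k<p'_k$) or ($k$ odd, $p_k>p'_k$). Valuation: $\mathcal{V}_\sigma(\bot)=\text{\o}$, $\mathcal{V}_\sigma(s)=\min^\prec_\tau\max^\prec\{\wp(\pi)\mid\pi$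 a play in $\mathcal{A}_\bot|_{\sigma,\tau}$ from $s\}$, min over player-$1$ strategies $\tau$. $\sigma$ is reasonable if $\mathcal{A}_\bot|_\sigma$ has no $1$-dominated cycle. *)

theory Defs
  imports Main "HOL-Library.Infinite_Set"
begin

text \<open>Vertices of the escape arena are \<open>'v option\<close>: \<open>Some v\<close> for \<open>v \<in> V\<close>, \<open>None\<close> for bottom.\<close>

text \<open>Colour profiles: \<open>-\<infinity>\<close>, integer vectors (finitely supported functions nat to int,
  coordinate k counts colour k), \<open>+\<infinity>\<close>.\<close>
datatype prof = NegInf | Fin "nat \<Rightarrow> int" | PosInf

definition pzero :: prof where "pzero = Fin (\<lambda>_. 0)"

definition punit :: "nat \<Rightarrow> prof" where
  "punit k = Fin (\<lambda>i. if i = k then 1 else 0)"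

fun padd :: "prof \<Rightarrow> prof \<Rightarrow> prof" where
  "padd _ PosInf = PosInf"
| "padd _ NegInf = NegInf"
| "padd (Fin a) (Fin b) = Fin (\<lambda>i. a i + b i)"
| "padd PosInf (Fin _) = PosInf"
| "padd NegInf (Fin _) = NegInf"

fun pless :: "prof \<Rightarrow> prof \<Rightarrow> bool" where
  "pless NegInf q = (q \<noteq> NegInf)"
| "pless PosInf q = False"
| "pless (Fin a) NegInf = False"
| "pless (Fin a) PosInf = True"
| "pless (Fin a) (Fin b) = (a \<noteq> b \<and>
     (let k = Max {i. a i \<noteq> b i} in
        (even k \<and> a k < b k) \<or> (odd k \<and> a k > b k)))"

definition pleq :: "prof \<Rightarrow> prof \<Rightarrow> bool" where
  "pleq p q = (p = q \<or> pless p q)"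

definition pmax :: "prof set \<Rightarrow> prof" where
  "pmax S = (THE m. m \<in> S \<and> (\<forall>x\<in>S. pleq x m))"

definition pmin :: "prof set \<Rightarrow> prof" where
  "pmin S = (THE m. m \<in> S \<and> (\<forall>x\<in>S. pleq m x))"

definition prof_path :: "('v \<Rightarrow> nat) \<Rightarrow> 'v option list \<Rightarrow> prof" where
  "prof_path c xs = Fin (\<lambda>k. int (length (filter
      (\<lambda>x. case x of Some v \<Rightarrow> c v = k | None \<Rightarrow> False) xs)))"

definition wins0 :: "('v \<Rightarrow> nat) \<Rightarrow> (nat \<Rightarrow> 'v option) \<Rightarrow> bool" where
  "wins0 c \<omega> = even (Max {k. \<exists>\<^sub>\<infinity> i. (case \<omega> i of Some v \<Rightarrow> c v = k | None \<Rightarrow> False)})"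

definition play_profs :: "('v \<Rightarrow> nat) \<Rightarrow> ('v option \<times> 'v option) set \<Rightarrow> 'v option \<Rightarrow> prof set" where
  "play_profs c G s =
     {prof_path c xs | xs. xs \<noteq> [] \<and> hd xs = s \<and>
        (\<forall>i. Suc i < length xs \<longrightarrow> (xs ! i, xs ! Suc i) \<in> G) \<and>
        (\<forall>y. (last xs, y) \<notin> G)}
   \<union> {if wins0 c \<omega> then PosInf else NegInf | \<omega>. \<omega> 0 = s \<and> (\<forall>i. (\<omega> i, \<omega> (Suc i)) \<in> G)}"

definition E0 :: "'v set \<Rightarrow> ('v \<times> 'v) set \<Rightarrow> ('v \<Rightarrow> nat) \<Rightarrow> ('v option \<times> 'v option) set" where
  "E0 V E own = {(Some a, Some b) | a b. (a, b) \<in> E \<and> a \<in> V \<and> own a = 0}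
              \<union> {(Some a, None) | a. a \<in> V \<and> own a = 0}"

definition E1 :: "'v set \<Rightarrow> ('v \<times> 'v) set \<Rightarrow> ('v \<Rightarrow> nat) \<Rightarrow> ('v option \<times> 'v option) set" where
  "E1 V E own = {(Some a, Some b) | a b. (a, b) \<in> E \<and> a \<in> V \<and> own a = 1}"

definition strategy0 :: "'v set \<Rightarrow> ('v \<times> 'v) set \<Rightarrow> ('v \<Rightarrow> nat) \<Rightarrow> ('v option \<times> 'v option) set \<Rightarrow> bool" where
  "strategy0 V E own \<sigma> = (\<sigma> \<subseteq> E0 V E own \<and> (\<forall>s\<in>V. own s = 0 \<longrightarrow> (\<exists>t. (Some s, t) \<in> \<sigma>)))"

definition strategy1 :: "'v set \<Rightarrow> ('v \<times> 'v) set \<Rightarrow> ('v \<Rightarrow> nat) \<Rightarrow> ('v option \<times> 'v option) set \<Rightarrow> bool" where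
  "strategy1 V E own \<tau> = (\<tau> \<subseteq> E1 V E own \<and> (\<forall>s\<in>V. own s = 1 \<longrightarrow> (\<exists>t. (Some s, t) \<in> \<tau>)))"

definition is_cycle :: "('v option \<times> 'v option) set \<Rightarrow> 'v list \<Rightarrow> bool" where
  "is_cycle G ws = (ws \<noteq> [] \<and>
     (\<forall>i < length ws. (Some (ws ! i), Some (ws ! ((i + 1) mod length ws))) \<in> G))"

definition reasonable :: "'v set \<Rightarrow> ('v \<times> 'v) set \<Rightarrow> ('v \<Rightarrow> nat) \<Rightarrow> ('v \<Rightarrow> nat)
    \<Rightarrow> ('v option \<times> 'v option) set \<Rightarrow> bool" where
  "reasonable V E own c \<sigma> =
     (\<not> (\<exists>ws. is_cycle (\<sigma> \<union> E1 V E own) ws \<and> odd (Max (c ` set ws))))"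

definition valuation :: "'v set \<Rightarrow> ('v \<times> 'v) set \<Rightarrow> ('v \<Rightarrow> nat) \<Rightarrow> ('v \<Rightarrow> nat)
    \<Rightarrow> ('v option \<times> 'v option) set \<Rightarrow> 'v option \<Rightarrow> prof" where
  "valuation V E own c \<sigma> x = (case x of None \<Rightarrow> pzero
     | Some s \<Rightarrow> pmin {pmax (play_profs c (\<sigma> \<union> \<tau>) (Some s)) | \<tau>. strategy1 V E own \<tau>})"

definition Vbot :: "'v option \<Rightarrow> prof" where
  "Vbot x = (case x of None \<Rightarrow> pzero | Some _ \<Rightarrow> PosInf)"

definition Fop :: "('v \<times> 'v) set \<Rightarrow> ('v \<Rightarrow> nat) \<Rightarrow> ('v \<Rightarrow> nat)
    \<Rightarrow> ('v option \<times> 'v option) set \<Rightarrow> ('v option \<Rightarrow> prof) \<Rightarrow> 'v option \<Rightarrow> prof" where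
  "Fop E own c \<sigma> W x = (case x of None \<Rightarrow> pzero
     | Some s \<Rightarrow> (if own s = 1
         then padd (punit (c s)) (pmin {W (Some t) | t. (s, t) \<in> E})
         else padd (punit (c s)) (pmax {W t | t. (Some s, t) \<in> \<sigma>})))"

end

theory Submission
  imports Defs
begin

fun gd :: "prof \<Rightarrow> bool" where
  "gd NegInf = False" | "gd PosInf = True" | "gd (Fin a) = finite {i. a i \<noteq> 0}"

lemma finite_diff: "finite {i. a i \<noteq> (0::int)} \<Longrightarrow> finite {i. b i \<noteq> 0} \<Longrightarrow> finite {i. a i \<noteq> b i}"
  by (rule finite_subset[of _ "{i. a i \<noteq> 0} \<union> {i. b i \<noteq> 0}"]) auto

lemma pless_Fin_char:
  assumes "finite {i. a i \<noteq> b i}"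
  shows "pless (Fin a) (Fin b) \<longleftrightarrow> (\<exists>k. (\<forall>i>k. a i = b i) \<and> ((even k \<and> a k < b k) \<or> (odd k \<and> b k < a k)))"
proof
  assume "pless (Fin a) (Fin b)"
  then have ne: "a \<noteq> b" and h: "let k = Max {i. a i \<noteq> b i} in (even k \<and> a k < b k) \<or> (odd k \<and> a k > b k)" by auto
  define k where "k = Max {i. a i \<noteq> b i}"
  have "\<forall>i>k. a i = b i" using Max_ge[OF assms] k_def by (meson leD mem_Collect_eq)
  with h show "\<exists>k. (\<forall>i>k. a i = b i) \<and> ((even k \<and> a k < b k) \<or> (odd k \<and> b k < a k))"
    unfolding k_def Let_def by blast
next
  assume "\<exists>k. (\<forall>i>k. a i = b i) \<and> ((even k \<and> a k < b k) \<or> (odd k \<and> b k < a k))"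
  then obtain k where k1: "\<forall>i>k. a i = b i" and k2: "(even k \<and> a k < b k) \<or> (odd k \<and> b k < a k)" by blast
  have kin: "k \<in> {i. a i \<noteq> b i}" using k2 by auto
  have "Max {i. a i \<noteq> b i} = k"
    by (rule Max_eqI[OF assms]) (use k1 kin in \<open>auto simp: not_less[symmetric]\<close>)
  moreover have "a \<noteq> b" using kin by auto
  ultimately show "pless (Fin a) (Fin b)" using k2 by (auto simp: Let_def)
qed

lemma pless_asym: "pless x y \<Longrightarrow> \<not> pless y x"
proof (cases x; cases y)
  fix a b assume "x = Fin a" "y = Fin b" "pless x y"
  moreover have "{i. b i \<noteq> a i} = {i. a i \<noteq> b i}" by auto
  ultimately show "\<not> pless y x" by (auto simp: Let_def)
qed auto

lemma pleq_antisym: "pleq x y \<Longrightarrow> pleq y x \<Longrightarrow> x = y"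
  unfolding pleq_def using pless_asym by blast

lemma pleq_top[simp]: "pleq x PosInf"
  unfolding pleq_def by (cases x) auto

lemma pleq_PosInf_iff: "pleq PosInf x \<longleftrightarrow> x = PosInf"
  unfolding pleq_def by auto

lemma pleq_refl[simp]: "pleq x x" unfolding pleq_def by auto



lemma pless_trans:
  assumes "gd x" "gd y" "gd z" "pless x y" "pless y z" shows "pless x z"
proof (cases x)
  case NegInf then show ?thesis using assms by auto
next
  case PosInf then show ?thesis using assms by auto
next
  case (Fin a)
  show ?thesis
  proof (cases z)
    case NegInf then show ?thesis using assms by auto
  next
    case PosInf then show ?thesis using Fin by auto
  next
    case (Fin cc)
    note zc = this
    show ?thesis
    proof (cases y)
      case NegInf then show ?thesis using assms by auto
    next
      case PosInf then show ?thesis using assms zc by auto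
    next
      case (Fin b)
      have f1: "finite {i. a i \<noteq> b i}" using assms \<open>x = Fin a\<close> Fin by (auto intro: finite_diff)
      have f2: "finite {i. b i \<noteq> cc i}" using assms zc Fin by (auto intro: finite_diff)
      have f3: "finite {i. a i \<noteq> cc i}" using assms zc \<open>x = Fin a\<close> by (auto intro: finite_diff)
      obtain k1 where k1: "\<forall>i>k1. a i = b i" "(even k1 \<and> a k1 < b k1) \<or> (odd k1 \<and> b k1 < a k1)"
        using assms(4) pless_Fin_char[OF f1] \<open>x = Fin a\<close> Fin by auto
      obtain k2 where k2: "\<forall>i>k2. b i = cc i" "(even k2 \<and> b k2 < cc k2) \<or> (odd k2 \<and> cc k2 < b k2)"
        using assms(5) pless_Fin_char[OF f2] zc Fin by auto
      have "\<exists>k. (\<forall>i>k. a i = cc i) \<and> ((even k \<and> a k < cc k) \<or> (odd k \<and> cc k < a k))"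
      proof (cases k1 k2 rule: linorder_cases)
        case less
        then show ?thesis using k1 k2 by (intro exI[of _ k2]) auto
      next
        case equal
        then show ?thesis using k1 k2 by (intro exI[of _ k2]) auto
      next
        case greater
        then show ?thesis using k1 k2 by (intro exI[of _ k1]) auto
      qed
      then show ?thesis using pless_Fin_char[OF f3] \<open>x = Fin a\<close> zc by auto
    qed
  qed
qed



lemma pleq_trans: "gd x \<Longrightarrow> gd y \<Longrightarrow> gd z \<Longrightarrow> pleq x y \<Longrightarrow> pleq y z \<Longrightarrow> pleq x z"
  unfolding pleq_def using pless_trans by blast

lemma pleq_total: "gd x \<Longrightarrow> gd y \<Longrightarrow> pleq x y \<or> pleq y x"
proof (cases x; cases y)
  fix a b assume xy: "x = Fin a" "y = Fin b" "gd x" "gd y"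
  show "pleq x y \<or> pleq y x"
  proof (cases "a = b")
    case False
    have f: "finite {i. a i \<noteq> b i}" using xy by (auto intro: finite_diff)
    define k where "k = Max {i. a i \<noteq> b i}"
    have ne: "{i. a i \<noteq> b i} \<noteq> {}" using False by auto
    have kin: "a k \<noteq> b k" unfolding k_def using Max_in[OF f ne] by simp
    have ab: "\<forall>i>k. a i = b i" using Max_ge[OF f] k_def by (meson leD mem_Collect_eq)
    have f': "finite {i. b i \<noteq> a i}" using f by (metis (mono_tags) Collect_cong)
    show ?thesis
    proof (cases "(even k \<and> a k < b k) \<or> (odd k \<and> b k < a k)")
      case True
      then have "pless (Fin a) (Fin b)" using pless_Fin_char[OF f] ab by blast
      then show ?thesis using xy unfolding pleq_def by blast
    next
      case False
      then have "(even k \<and> b k < a k) \<or> (odd k \<and> a k < b k)" using kin by auto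
      then have "pless (Fin b) (Fin a)" using pless_Fin_char[OF f'] ab by (metis)
      then show ?thesis using xy unfolding pleq_def by blast
    qed
  qed (auto simp: pleq_def xy)
qed (auto simp: pleq_def)

lemma padd_Fin_mono: "pleq x y \<Longrightarrow> pleq (padd (Fin u) x) (padd (Fin u) y)"
proof (cases x; cases y)
  fix a b assume xy: "x = Fin a" "y = Fin b" "pleq x y"
  show ?thesis
  proof (cases "a = b")
    case True then show ?thesis using xy by simp
  next
    case False
    have D: "{i. u i + a i \<noteq> u i + b i} = {i. a i \<noteq> b i}" by auto
    have ne: "(\<lambda>i. u i + a i) \<noteq> (\<lambda>i. u i + b i)"
    proof
      assume "(\<lambda>i. u i + a i) = (\<lambda>i. u i + b i)"
      then have "\<And>i. a i = b i" by (metis add_left_cancel)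
      then show False using False by blast
    qed
    have "pless (Fin a) (Fin b)" using xy False unfolding pleq_def by simp
    then have "let k = Max {i. a i \<noteq> b i} in (even k \<and> a k < b k) \<or> (odd k \<and> a k > b k)" by simp
    then have "pless (Fin (\<lambda>i. u i + a i)) (Fin (\<lambda>i. u i + b i))" using ne D by (simp add: Let_def)
    then show ?thesis using xy unfolding pleq_def by simp
  qed
qed (auto simp: pleq_def)


lemma gd_padd: "finite {i. u i \<noteq> 0} \<Longrightarrow> gd x \<Longrightarrow> gd (padd (Fin u) x)"
proof (cases x)
  case (Fin b)
  assume "finite {i. u i \<noteq> 0}" "gd x"
  then have "finite ({i. u i \<noteq> 0} \<union> {i. b i \<noteq> 0})" using Fin by auto
  then have "finite {i. u i + b i \<noteq> 0}" by (rule finite_subset[rotated]) auto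
  then show ?thesis using Fin by simp
qed auto

lemma ex_max: "finite S \<Longrightarrow> S \<noteq> {} \<Longrightarrow> \<forall>x\<in>S. gd x \<Longrightarrow> \<exists>m\<in>S. \<forall>x\<in>S. pleq x m"
proof (induction S rule: finite_ne_induct)
  case (singleton x) then show ?case by auto
next
  case (insert x F)
  then obtain m where m: "m \<in> F" "\<forall>y\<in>F. pleq y m" by auto
  show ?case
  proof (cases "pleq x m")
    case True then show ?thesis using m by auto
  next
    case False
    have gx: "gd x" and gm: "gd m" using insert m by auto
    then have mx: "pleq m x" using pleq_total False by blast
    have "\<forall>y\<in>insert x F. pleq y x"
    proof
      fix y assume "y \<in> insert x F"
      then show "pleq y x"
      proof
        assume "y \<in> F" then show ?thesis using pleq_trans[OF _ gm gx _ mx] m insert.prems by auto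
      qed simp
    qed
    then show ?thesis by blast
  qed
qed

lemma ex_min: "finite S \<Longrightarrow> S \<noteq> {} \<Longrightarrow> \<forall>x\<in>S. gd x \<Longrightarrow> \<exists>m\<in>S. \<forall>x\<in>S. pleq m x"
proof (induction S rule: finite_ne_induct)
  case (singleton x) then show ?case by auto
next
  case (insert x F)
  then obtain m where m: "m \<in> F" "\<forall>y\<in>F. pleq m y" by auto
  show ?case
  proof (cases "pleq m x")
    case True then show ?thesis using m by auto
  next
    case False
    have gx: "gd x" and gm: "gd m" using insert m by auto
    then have mx: "pleq x m" using pleq_total False by blast
    have "\<forall>y\<in>insert x F. pleq x y"
    proof
      fix y assume "y \<in> insert x F"
      then show "pleq x y"
      proof
        assume "y \<in> F" then show ?thesis using pleq_trans[OF gx gm _ mx] m insert.prems by auto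
      qed simp
    qed
    then show ?thesis by blast
  qed
qed

lemma pmax_prop:
  assumes "finite S" "S \<noteq> {}" "\<forall>x\<in>S. gd x"
  shows "pmax S \<in> S \<and> (\<forall>x\<in>S. pleq x (pmax S))"
proof -
  obtain m where m: "m \<in> S" "\<forall>x\<in>S. pleq x m" using ex_max[OF assms] by blast
  have "pmax S = m" unfolding pmax_def
    by (rule the_equality) (use m pleq_antisym in auto)
  then show ?thesis using m by auto
qed

lemma pmin_prop:
  assumes "finite S" "S \<noteq> {}" "\<forall>x\<in>S. gd x"
  shows "pmin S \<in> S \<and> (\<forall>x\<in>S. pleq (pmin S) x)"
proof -
  obtain m where m: "m \<in> S" "\<forall>x\<in>S. pleq m x" using ex_min[OF assms] by blast
  have "pmin S = m" unfolding pmin_def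
    by (rule the_equality) (use m pleq_antisym in auto)
  then show ?thesis using m by auto
qed

lemma pmax_PosInf: "PosInf \<in> S \<Longrightarrow> pmax S = PosInf"
  unfolding pmax_def by (rule the_equality) (auto simp: pleq_PosInf_iff)

lemma pmin_mono:
  assumes "finite T" "T \<noteq> {}" "\<forall>t\<in>T. gd (f t) \<and> gd (g t) \<and> pleq (f t) (g t)"
  shows "pleq (pmin (f ` T)) (pmin (g ` T))"
proof -
  have G: "pmin (g ` T) \<in> g ` T" using pmin_prop[of "g ` T"] assms by auto
  then obtain t where t: "t \<in> T" "pmin (g ` T) = g t" by auto
  have "pleq (pmin (f ` T)) (f t)" using pmin_prop[of "f ` T"] assms t by auto
  moreover have "gd (pmin (f ` T))" using pmin_prop[of "f ` T"] assms by auto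
  ultimately show ?thesis using t assms pleq_trans by metis
qed

lemma pmax_mono:
  assumes "finite T" "T \<noteq> {}" "\<forall>t\<in>T. gd (f t) \<and> gd (g t) \<and> pleq (f t) (g t)"
  shows "pleq (pmax (f ` T)) (pmax (g ` T))"
proof -
  have G: "pmax (f ` T) \<in> f ` T" using pmax_prop[of "f ` T"] assms by auto
  then obtain t where t: "t \<in> T" "pmax (f ` T) = f t" by auto
  have "pleq (g t) (pmax (g ` T))" using pmax_prop[of "g ` T"] assms t by auto
  moreover have "gd (pmax (g ` T))" using pmax_prop[of "g ` T"] assms by auto
  ultimately show ?thesis using t assms pleq_trans by metis
qed



lemma prof_Nil[simp]: "prof_path c [] = pzero" by (simp add: prof_path_def pzero_def)

lemma prof_Some[simp]: "prof_path c (Some v # xs) = padd (punit (c v)) (prof_path c xs)"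
  by (auto simp: prof_path_def punit_def intro!: ext)

lemma prof_None[simp]: "prof_path c (None # xs) = prof_path c xs"
  by (auto simp: prof_path_def)

lemma prof_snoc_None[simp]: "prof_path c (xs @ [None]) = prof_path c xs"
  apply (induction xs)
   apply simp
  subgoal for a xs by (cases a) auto
  done

lemma prof_Fin: "\<exists>f. prof_path c xs = Fin f \<and> finite {i. f i \<noteq> 0}"
proof (induction xs)
  case Nil then show ?case by (auto simp: pzero_def)
next
  case (Cons a xs)
  then obtain f where f: "prof_path c xs = Fin f" "finite {i. f i \<noteq> 0}" by blast
  show ?case
  proof (cases a)
    case None then show ?thesis using f by auto
  next
    case (Some v)
    have "finite (insert (c v) {i. f i \<noteq> 0})" using f by auto
    then have "finite {i. (if i = c v then 1 else 0) + f i \<noteq> 0}"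
      by (rule finite_subset[rotated]) auto
    then show ?thesis using f Some by (auto simp: punit_def)
  qed
qed

lemma gd_prof[simp]: "gd (prof_path c xs)" using prof_Fin[of c xs] by auto

lemma punit_Fin: "\<exists>u. punit k = Fin u \<and> finite {i. u i \<noteq> 0}"
  by (auto simp: punit_def)

lemma gd_punit_add: "gd x \<Longrightarrow> gd (padd (punit k) x)"
  using punit_Fin[of k] gd_padd by auto

lemma punit_mono: "pleq x y \<Longrightarrow> pleq (padd (punit k) x) (padd (punit k) y)"
  unfolding punit_def by (rule padd_Fin_mono)

lemma padd_pzero[simp]: "padd pzero y = y"
  by (cases y) (auto simp: pzero_def)

lemma padd_assoc_Fin: "padd (Fin a) (padd (Fin b) y) = padd (padd (Fin a) (Fin b)) y"
  by (cases y) (auto simp: add.assoc)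

lemma prof_cons_assoc: "padd (prof_path c (x # xs)) y = (case x of Some v \<Rightarrow> padd (punit (c v)) (padd (prof_path c xs) y) | None \<Rightarrow> padd (prof_path c xs) y)"
proof -
  obtain f where f: "prof_path c xs = Fin f" using prof_Fin by blast
  show ?thesis by (cases x) (auto simp: f punit_def padd_assoc_Fin)
qed

lemma prof_map_Some: "prof_path c (map Some ws) = Fin (\<lambda>k. int (length (filter (\<lambda>v. c v = k) ws)))"
  by (induction ws) (auto simp: pzero_def punit_def)

lemma positive_cycle:
  assumes "ws \<noteq> []" "even (Max (c ` set ws))"
  shows "pless pzero (prof_path c (map Some ws))"
proof -
  define f where "f = (\<lambda>k. int (length (filter (\<lambda>v. c v = k) ws)))"
  have S: "{i. f i \<noteq> 0} = c ` set ws"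
    by (auto simp: f_def filter_empty_conv)
  define m where "m = Max (c ` set ws)"
  have "m \<in> c ` set ws" unfolding m_def using assms(1) by auto
  then have fm: "0 < f m" unfolding f_def by (auto simp: filter_empty_conv)
  have ne: "(\<lambda>_. 0::int) \<noteq> f" using fm by auto
  show ?thesis using ne fm assms(2) unfolding prof_map_Some f_def[symmetric] pzero_def
    by (simp add: S m_def[symmetric] Let_def)
qed

lemma no_pos_fix:
  assumes "pless pzero (Fin p)" "pleq (padd (Fin p) (Fin b)) (Fin b)"
  shows False
proof -
  have "pleq (padd (Fin (\<lambda>i. - b i)) (padd (Fin p) (Fin b))) (padd (Fin (\<lambda>i. - b i)) (Fin b))"
    by (rule padd_Fin_mono[OF assms(2)])
  then have "pleq (Fin p) pzero" by (simp add: pzero_def)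
  then have "Fin p = pzero \<or> pless (Fin p) pzero" unfolding pleq_def .
  then show False using assms(1) unfolding pzero_def by (auto simp: Let_def)
qed

definition walk :: "('a \<times> 'a) set \<Rightarrow> 'a list \<Rightarrow> bool" where
  "walk G xs \<longleftrightarrow> xs \<noteq> [] \<and> (\<forall>i. Suc i < length xs \<longrightarrow> (xs ! i, xs ! Suc i) \<in> G)"

definition infpath :: "('a \<times> 'a) set \<Rightarrow> (nat \<Rightarrow> 'a) \<Rightarrow> bool" where
  "infpath G \<omega> \<longleftrightarrow> (\<forall>i. (\<omega> i, \<omega> (Suc i)) \<in> G)"

lemma pump:
  assumes "walk G xs" "j < k" "k < length xs" "xs ! j = xs ! k"
  shows "\<exists>\<omega>. \<omega> 0 = hd xs \<and> infpath G \<omega>"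
proof -
  define L where "L = k - j"
  have L: "L > 0" using assms L_def by auto
  define \<omega> where "\<omega> i = (if i < j then xs ! i else xs ! (j + (i - j) mod L))" for i
  have "\<omega> 0 = hd xs" using assms(1) L unfolding \<omega>_def walk_def by (auto simp: hd_conv_nth)
  moreover have "infpath G \<omega>"
    unfolding infpath_def
  proof
    fix i
    show "(\<omega> i, \<omega> (Suc i)) \<in> G"
    proof (cases "Suc i < j")
      case True then show ?thesis using assms unfolding \<omega>_def walk_def by auto
    next
      case False
      note F = this
      show ?thesis
      proof (cases "i < j")
        case True
        then have "i = j - 1" "j > 0" using F by auto
        then have "\<omega> i = xs ! i" "\<omega> (Suc i) = xs ! Suc i" using True unfolding \<omega>_def by auto
        moreover have "Suc i < length xs" using assms True by auto
        ultimately show ?thesis using assms(1) unfolding walk_def by auto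
      next
        case False
        define r where "r = (i - j) mod L"
        have rL: "r < L" using L r_def by auto
        have w1: "\<omega> i = xs ! (j + r)" using False unfolding \<omega>_def r_def by auto
        show ?thesis
        proof (cases "Suc r < L")
          case True
          have "(Suc i - j) mod L = Suc r"
            using True False unfolding r_def by (simp add: Suc_diff_le mod_Suc)
          then have "\<omega> (Suc i) = xs ! Suc (j + r)" using False unfolding \<omega>_def by auto
          moreover have "Suc (j + r) < length xs" using True assms L_def by auto
          ultimately show ?thesis using w1 assms(1) unfolding walk_def by auto
        next
          case False
          then have rr: "Suc r = L" using rL by auto
          have "(Suc i - j) mod L = 0"
            using rr \<open>\<not> i < j\<close> unfolding r_def by (simp add: Suc_diff_le mod_Suc)
          then have "\<omega> (Suc i) = xs ! k" using \<open>\<not> i < j\<close> assms(4) unfolding \<omega>_def by auto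
          moreover have "j + r = k - 1" "Suc (k - 1) = k" using rr L_def assms by auto
          ultimately show ?thesis using w1 assms(1,3) unfolding walk_def by (metis)
        qed
      qed
    qed
  qed
  ultimately show ?thesis by blast
qed

lemma pigeon:
  assumes "finite A" "set xs \<subseteq> A" "card A < length xs"
  shows "\<exists>j k. j < k \<and> k < length xs \<and> xs ! j = xs ! k"
proof -
  have "card (set xs) \<le> card A" using assms card_mono by auto
  then have "\<not> distinct xs" using assms distinct_card by fastforce
  then obtain i j where "i < length xs" "j < length xs" "i \<noteq> j" "xs ! i = xs ! j"
    by (auto simp: distinct_conv_nth)
  then show ?thesis by (metis linorder_neqE_nat)
qed



locale arena =
  fixes V :: "'v set" and E :: "('v \<times> 'v) set" and own :: "'v \<Rightarrow> nat"
    and c :: "'v \<Rightarrow> nat" and \<sigma> :: "('v option \<times> 'v option) set"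
  assumes finV: "finite V"
    and EV: "E \<subseteq> V \<times> V"
    and succ: "\<forall>v\<in>V. \<exists>w. (v, w) \<in> E"
    and own01: "\<forall>v\<in>V. own v \<in> {0, 1}"
    and strat: "strategy0 V E own \<sigma>"
    and reas: "reasonable V E own c \<sigma>"
begin

abbreviation "AA \<equiv> insert None (Some ` V)"

lemma sigma_edge: "(x, y) \<in> \<sigma> \<Longrightarrow> \<exists>a\<in>V. x = Some a \<and> own a = 0 \<and> y \<in> AA"
proof -
  assume "(x, y) \<in> \<sigma>"
  then have "(x, y) \<in> E0 V E own" using strat unfolding strategy0_def by auto
  then show ?thesis using EV unfolding E0_def by blast
qed

lemma E1_edge: "(x, y) \<in> E1 V E own \<Longrightarrow> \<exists>a\<in>V. x = Some a \<and> own a = 1 \<and> (\<exists>b. y = Some b \<and> (a, b) \<in> E)"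
  unfolding E1_def by auto

lemma G_edge: "(x, y) \<in> \<sigma> \<union> E1 V E own \<Longrightarrow> \<exists>a\<in>V. x = Some a \<and> y \<in> AA"
proof -
  assume "(x, y) \<in> \<sigma> \<union> E1 V E own"
  then show ?thesis
  proof
    assume "(x, y) \<in> \<sigma>" then show ?thesis using sigma_edge by blast
  next
    assume "(x, y) \<in> E1 V E own"
    then obtain a b where "a \<in> V" "x = Some a" "y = Some b" "(a, b) \<in> E" using E1_edge by blast
    then show ?thesis using EV by blast
  qed
qed

lemma tau_sub: "strategy1 V E own \<tau> \<Longrightarrow> \<sigma> \<union> \<tau> \<subseteq> \<sigma> \<union> E1 V E own"
  unfolding strategy1_def by auto

lemma G_succ: "strategy1 V E own \<tau> \<Longrightarrow> a \<in> V \<Longrightarrow> \<exists>y. (Some a, y) \<in> \<sigma> \<union> \<tau>"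
proof -
  assume t: "strategy1 V E own \<tau>" and a: "a \<in> V"
  show ?thesis
  proof (cases "own a = 0")
    case True then show ?thesis using strat a unfolding strategy0_def by blast
  next
    case False then have "own a = 1" using own01 a by auto
    then show ?thesis using t a unfolding strategy1_def by blast
  qed
qed

lemma no_None_edge: "G \<subseteq> \<sigma> \<union> E1 V E own \<Longrightarrow> (None, y) \<notin> G"
  using G_edge by blast

lemma walk_set:
  assumes "G \<subseteq> \<sigma> \<union> E1 V E own" "walk G xs" "hd xs \<in> AA"
  shows "set xs \<subseteq> AA"
proof
  fix x assume "x \<in> set xs"
  then obtain i where i: "i < length xs" "xs ! i = x" by (auto simp: in_set_conv_nth)
  show "x \<in> AA"
  proof (cases i)
    case 0 then show ?thesis using assms i by (auto simp: hd_conv_nth walk_def)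
  next
    case (Suc j)
    then have "(xs ! j, xs ! i) \<in> G" using assms(2) i unfolding walk_def by auto
    then have "(xs ! j, xs ! i) \<in> \<sigma> \<union> E1 V E own" using assms(1) by blast
    from G_edge[OF this] show ?thesis using i by auto
  qed
qed

lemma walk_Some:
  assumes "G \<subseteq> \<sigma> \<union> E1 V E own" "walk G xs" "Suc i < length xs"
  shows "xs ! i \<in> Some ` V"
proof -
  have "(xs ! i, xs ! Suc i) \<in> G" using assms unfolding walk_def by blast
  then have "(xs ! i, xs ! Suc i) \<in> \<sigma> \<union> E1 V E own" using assms(1) by blast
  from G_edge[OF this] show ?thesis by auto
qed

lemma infpath_Some:
  assumes "G \<subseteq> \<sigma> \<union> E1 V E own" "infpath G \<omega>"
  shows "\<omega> i \<in> Some ` V"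
proof -
  have "(\<omega> i, \<omega> (Suc i)) \<in> G" using assms unfolding infpath_def by blast
  then have "(\<omega> i, \<omega> (Suc i)) \<in> \<sigma> \<union> E1 V E own" using assms(1) by blast
  from G_edge[OF this] show ?thesis by auto
qed

end


context arena begin
lemma inf_wins:
  assumes G: "G \<subseteq> \<sigma> \<union> E1 V E own" and om: "infpath G \<omega>"
  shows "wins0 c \<omega>"
proof -
  define \<nu> where "\<nu> i = the (\<omega> i)" for i
  have \<nu>V: "\<nu> i \<in> V" and \<omega>\<nu>: "\<omega> i = Some (\<nu> i)" for i
    using infpath_Some[OF G om, of i] unfolding \<nu>_def by auto
  define I where "I = {v\<in>V. \<exists>\<^sub>\<infinity> i. \<nu> i = v}"
  have "finite (\<Union>v\<in>V-I. {i. \<nu> i = v})"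
    using finV by (auto simp: I_def INFM_iff_infinite)
  then obtain N where N: "\<forall>i\<in>(\<Union>v\<in>V-I. {i. \<nu> i = v}). i < N"
    unfolding finite_nat_set_iff_bounded by blast
  have NI: "\<nu> i \<in> I" if "i \<ge> N" for i
  proof (rule ccontr)
    assume "\<nu> i \<notin> I"
    then have "i \<in> (\<Union>v\<in>V-I. {i. \<nu> i = v})" using \<nu>V[of i] by blast
    then have "i < N" using N by blast
    then show False using that by simp
  qed
  define K where "K = {k. \<exists>\<^sub>\<infinity> i. c (\<nu> i) = k}"
  have Keq: "{k. \<exists>\<^sub>\<infinity> i. (case \<omega> i of Some v \<Rightarrow> c v = k | None \<Rightarrow> False)} = K"
    unfolding K_def by (simp add: \<omega>\<nu>)
  have IK: "c v \<in> K" if "v \<in> I" for v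
  proof -
    have "\<exists>\<^sub>\<infinity> i. \<nu> i = v" using that unfolding I_def by blast
    then have "\<exists>\<^sub>\<infinity> i. c (\<nu> i) = c v" by (rule INFM_mono) simp
    then show ?thesis unfolding K_def by simp
  qed
  have Kfin: "finite K"
  proof (rule finite_subset[of _ "c ` V"])
    show "K \<subseteq> c ` V"
    proof
      fix k assume "k \<in> K"
      then obtain i where "c (\<nu> i) = k" unfolding K_def using INFM_E by blast
      then show "k \<in> c ` V" using \<nu>V by auto
    qed
  qed (use finV in auto)
  have Kne: "K \<noteq> {}" using IK[OF NI[of N]] by auto
  define m where "m = Max K"
  have mK: "m \<in> K" using Kfin Kne m_def by auto
  have Kle: "k \<in> K \<Longrightarrow> k \<le> m" for k using Kfin m_def by auto
  have "infinite {i. c (\<nu> i) = m}" using mK unfolding K_def INFM_iff_infinite by simp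
  moreover have "finite (\<nu> ` {i. c (\<nu> i) = m})"
  proof (rule finite_subset[OF _ finV])
    show "\<nu> ` {i. c (\<nu> i) = m} \<subseteq> V" using \<nu>V by blast
  qed
  ultimately have "\<exists>y\<in>\<nu> ` {i. c (\<nu> i) = m}. infinite (\<nu> -` {y} \<inter> {i. c (\<nu> i) = m})"
    by (intro inf_img_fin_dom')
  then obtain v where v: "v \<in> \<nu> ` {i. c (\<nu> i) = m}" "infinite (\<nu> -` {v} \<inter> {i. c (\<nu> i) = m})"
    by blast
  have cv: "c v = m" using v(1) by auto
  have vinf: "\<exists>\<^sub>\<infinity> i. \<nu> i = v"
  proof -
    have "\<nu> -` {v} \<inter> {i. c (\<nu> i) = m} \<subseteq> {i. \<nu> i = v}" by blast
    then have "infinite {i. \<nu> i = v}" using v(2) infinite_super by blast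
    then show ?thesis unfolding INFM_iff_infinite .
  qed
  obtain j where j: "j \<ge> N" "\<nu> j = v" using vinf unfolding INFM_nat_le by blast
  obtain k where k: "k > j" "\<nu> k = v" using vinf unfolding INFM_nat by blast
  define L where "L = k - j"
  have L0: "L > 0" using k L_def by auto
  define ws where "ws = map \<nu> [j..<k]"
  have lws: "length ws = L" unfolding ws_def L_def by simp
  have wsi: "i < L \<Longrightarrow> ws ! i = \<nu> (j + i)" for i unfolding ws_def L_def by simp
  have cyc: "is_cycle (\<sigma> \<union> E1 V E own) ws"
    unfolding is_cycle_def
  proof (intro conjI allI impI)
    show "ws \<noteq> []" using lws L0 by auto
  next
    fix i assume "i < length ws"
    then have iL: "i < L" using lws by simp
    have e: "(\<omega> (j + i), \<omega> (Suc (j + i))) \<in> G" using om unfolding infpath_def by blast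
    then have e': "(Some (\<nu> (j + i)), Some (\<nu> (Suc (j + i)))) \<in> \<sigma> \<union> E1 V E own"
      using G unfolding \<omega>\<nu> by blast
    have w1: "ws ! i = \<nu> (j + i)" using wsi[OF iL] .
    show "(Some (ws ! i), Some (ws ! ((i + 1) mod length ws))) \<in> \<sigma> \<union> E1 V E own"
    proof (cases "i + 1 < L")
      case True
      then have "(i + 1) mod length ws = i + 1" using lws by simp
      moreover have "ws ! (i + 1) = \<nu> (Suc (j + i))" using wsi[OF True] by simp
      ultimately show ?thesis using e' w1 by simp
    next
      case False
      then have "i + 1 = L" using iL by simp
      then have "(i + 1) mod length ws = 0" "Suc (j + i) = k" using lws L_def k by auto
      moreover have "ws ! 0 = \<nu> k" using wsi[OF L0] j k by simp
      ultimately show ?thesis using e' w1 by simp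
    qed
  qed
  have "Max (c ` set ws) = m"
  proof (rule Max_eqI)
    show "finite (c ` set ws)" by simp
  next
    fix y assume "y \<in> c ` set ws"
    then obtain x where "x \<in> {j..<k}" "y = c (\<nu> x)" unfolding ws_def by auto
    then show "y \<le> m" using Kle IK NI j(1) by auto
  next
    show "m \<in> c ` set ws" using cv j k unfolding ws_def by force
  qed
  then have "even m" using reas cyc unfolding reasonable_def by auto
  then show ?thesis unfolding wins0_def Keq m_def .
qed

end


lemma walk_single[simp]: "walk G [x]" unfolding walk_def by simp

lemma walk_Cons: "walk G (x # y # xs) \<longleftrightarrow> (x, y) \<in> G \<and> walk G (y # xs)"
  unfolding walk_def
  apply (auto simp: nth_Cons split: nat.splits)
  done

lemma walk_snoc: "walk G xs \<Longrightarrow> (last xs, y) \<in> G \<Longrightarrow> walk G (xs @ [y])"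
proof -
  assume w: "walk G xs" and l: "(last xs, y) \<in> G"
  have "(\<forall>i. Suc i < length (xs @ [y]) \<longrightarrow> ((xs @ [y]) ! i, (xs @ [y]) ! Suc i) \<in> G)"
  proof (intro allI impI)
    fix i assume i: "Suc i < length (xs @ [y])"
    show "((xs @ [y]) ! i, (xs @ [y]) ! Suc i) \<in> G"
    proof (cases "Suc i < length xs")
      case True then show ?thesis using w by (simp add: walk_def nth_append)
    next
      case False
      then have "Suc i = length xs" using i by simp
      then have ii: "i = length xs - 1" by simp
      have "xs \<noteq> []" using w by (simp add: walk_def)
      then have "(xs @ [y]) ! i = last xs" "(xs @ [y]) ! Suc i = y" using \<open>Suc i = length xs\<close> ii
        by (auto simp: nth_append last_conv_nth)
      then show ?thesis using l by simp
    qed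
  qed
  then show ?thesis unfolding walk_def by simp
qed

lemma play_profs_eq:
  "play_profs c G s =
     {prof_path c xs | xs. walk G xs \<and> hd xs = s \<and> (\<forall>y. (last xs, y) \<notin> G)}
   \<union> {if wins0 c \<omega> then PosInf else NegInf | \<omega>. \<omega> 0 = s \<and> infpath G \<omega>}"
  unfolding play_profs_def walk_def infpath_def by blast

context arena begin

lemma walk_bound:
  assumes G: "G \<subseteq> \<sigma> \<union> E1 V E own" and w: "walk G xs"
    and noinf: "\<not> (\<exists>\<omega>. \<omega> 0 = hd xs \<and> infpath G \<omega>)"
  shows "length xs \<le> Suc (card V)"
proof (rule ccontr)
  assume "\<not> length xs \<le> Suc (card V)"
  then have len: "Suc (card V) < length xs" by simp
  define ys where "ys = take (Suc (card V)) xs"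
  have lys: "length ys = Suc (card V)" using len unfolding ys_def by simp
  have "set ys \<subseteq> Some ` V"
  proof
    fix y assume "y \<in> set ys"
    then obtain i where i: "i < length ys" "ys ! i = y" by (auto simp: in_set_conv_nth)
    then have "ys ! i = xs ! i" "Suc i < length xs" using lys len unfolding ys_def by auto
    then show "y \<in> Some ` V" using walk_Some[OF G w] i by auto
  qed
  moreover have "card (Some ` V) < length ys" using lys card_image_le[OF finV, of Some] by simp
  ultimately obtain j k where jk: "j < k" "k < length ys" "ys ! j = ys ! k"
    using pigeon[of "Some ` V" ys] finV by blast
  then have "xs ! j = xs ! k" "k < length xs" using lys len unfolding ys_def by auto
  then show False using pump[OF w jk(1)] noinf by blast
qed

lemma M_prop:
  assumes \<tau>: "strategy1 V E own \<tau>" and s: "s \<in> V"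
  defines "S \<equiv> play_profs c (\<sigma> \<union> \<tau>) (Some s)"
  shows "pmax S \<in> S \<and> (\<forall>x\<in>S. pleq x (pmax S)) \<and> gd (pmax S)"
proof -
  define G where "G = \<sigma> \<union> \<tau>"
  have Gs: "G \<subseteq> \<sigma> \<union> E1 V E own" using tau_sub[OF \<tau>] G_def by simp
  show ?thesis
  proof (cases "\<exists>\<omega>. \<omega> 0 = Some s \<and> infpath G \<omega>")
    case True
    then obtain \<omega> where om: "\<omega> 0 = Some s" "infpath G \<omega>" by blast
    have "wins0 c \<omega>" using inf_wins[OF Gs om(2)] .
    then have "PosInf \<in> S" unfolding S_def play_profs_eq G_def[symmetric] using om by force
    then show ?thesis using pmax_PosInf[of S] by simp
  next
    case False
    define WK where "WK = {xs. walk G xs \<and> hd xs = Some s}"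
    have bnd: "xs \<in> WK \<Longrightarrow> length xs \<le> Suc (card V)" for xs
      using walk_bound[OF Gs, of xs] False unfolding WK_def by auto
    have "WK \<subseteq> {xs. set xs \<subseteq> AA \<and> length xs \<le> Suc (card V)}"
    proof
      fix xs assume xs: "xs \<in> WK"
      have "set xs \<subseteq> AA" using walk_set[OF Gs, of xs] xs s unfolding WK_def by auto
      then show "xs \<in> {xs. set xs \<subseteq> AA \<and> length xs \<le> Suc (card V)}" using bnd[OF xs] by simp
    qed
    then have finWK: "finite WK" by (rule finite_subset) (use finV in \<open>auto intro: finite_lists_length_le\<close>)
    have s1: "[Some s] \<in> WK" unfolding WK_def by simp
    define n where "n = Max (length ` WK)"
    have finL: "finite (length ` WK)" using finWK by simp
    have n: "n \<in> length ` WK" "\<forall>m\<in>length ` WK. m \<le> n"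
    proof -
      have ne: "length ` WK \<noteq> {}" using s1 by auto
      show "n \<in> length ` WK" unfolding n_def using Max_in[OF finL ne] .
      show "\<forall>m\<in>length ` WK. m \<le> n" unfolding n_def using Max_ge[OF finL] by blast
    qed
    then obtain xs where xs: "xs \<in> WK" "length xs = n" by auto
    have maxi: "\<forall>y. (last xs, y) \<notin> G"
    proof (intro allI notI)
      fix y assume "(last xs, y) \<in> G"
      then have w': "walk G (xs @ [y])" using xs(1) walk_snoc unfolding WK_def by auto
      have "xs \<noteq> []" using xs(1) unfolding WK_def walk_def by auto
      then have "hd (xs @ [y]) = Some s" using xs(1) unfolding WK_def by simp
      then have "xs @ [y] \<in> WK" using w' unfolding WK_def by simp
      then have "length (xs @ [y]) \<le> n" using n(2) by blast
      then show False using xs(2) by simp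
    qed
    define FP where "FP = {prof_path c xs | xs. walk G xs \<and> hd xs = Some s \<and> (\<forall>y. (last xs, y) \<notin> G)}"
    have SFP: "S = FP" unfolding S_def play_profs_eq G_def[symmetric] FP_def using False by auto
    have "FP \<subseteq> prof_path c ` WK" unfolding FP_def WK_def by auto
    then have "finite FP" using finWK finite_surj by blast
    moreover have "FP \<noteq> {}" using xs maxi unfolding FP_def WK_def by blast
    moreover have "\<forall>x\<in>FP. gd x" unfolding FP_def by auto
    ultimately show ?thesis using pmax_prop[of FP] SFP by auto
  qed
qed

end


context arena begin

definition Wf :: "nat \<Rightarrow> 'v option \<Rightarrow> prof" where
  "Wf i = (Fop E own c \<sigma> ^^ i) Vbot"

lemma Wf_0: "Wf 0 = Vbot" unfolding Wf_def by simp
lemma Wf_Suc: "Wf (Suc i) = Fop E own c \<sigma> (Wf i)" unfolding Wf_def by simp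

lemma Wf_None[simp]: "Wf i None = pzero"
  by (cases i) (auto simp: Wf_0 Wf_Suc Vbot_def Fop_def)

lemma Fop_Some1: "own s = 1 \<Longrightarrow> Fop E own c \<sigma> W (Some s) =
   padd (punit (c s)) (pmin ((\<lambda>t. W (Some t)) ` {t. (s, t) \<in> E}))"
  unfolding Fop_def by (simp add: setcompr_eq_image)

lemma Fop_Some0: "own s \<noteq> 1 \<Longrightarrow> Fop E own c \<sigma> W (Some s) =
   padd (punit (c s)) (pmax (W ` {t. (Some s, t) \<in> \<sigma>}))"
  unfolding Fop_def by (simp add: setcompr_eq_image)

lemma succ1_fin: "finite {t. (s, t) \<in> E}"
proof -
  have "{t. (s, t) \<in> E} \<subseteq> V" using EV by auto
  then show ?thesis using finV finite_subset by blast
qed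

lemma succ1_ne: "s \<in> V \<Longrightarrow> {t. (s, t) \<in> E} \<noteq> {}" using succ by auto

lemma succ1_V: "t \<in> {t. (s, t) \<in> E} \<Longrightarrow> t \<in> V" using EV by auto

lemma succ0_sub: "{t. (Some s, t) \<in> \<sigma>} \<subseteq> AA"
  using sigma_edge by blast

lemma succ0_fin: "finite {t. (Some s, t) \<in> \<sigma>}"
  using succ0_sub finV finite_subset by blast

lemma succ0_ne: "s \<in> V \<Longrightarrow> own s \<noteq> 1 \<Longrightarrow> {t. (Some s, t) \<in> \<sigma>} \<noteq> {}"
  using strat own01 unfolding strategy0_def by auto

lemma Wf_gd: "x \<in> AA \<Longrightarrow> gd (Wf i x)"
proof (induction i arbitrary: x)
  case 0 then show ?case by (auto simp: Wf_0 Vbot_def pzero_def)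
next
  case (Suc i)
  show ?case
  proof (cases x)
    case None then show ?thesis by (simp add: pzero_def)
  next
    case (Some s)
    then have s: "s \<in> V" using Suc.prems by auto
    show ?thesis
    proof (cases "own s = 1")
      case True
      let ?S = "(\<lambda>t. Wf i (Some t)) ` {t. (s, t) \<in> E}"
      have "\<forall>x\<in>?S. gd x" using Suc.IH succ1_V by blast
      then have "gd (pmin ?S)" using pmin_prop[of ?S] succ1_fin succ1_ne[OF s] by auto
      then show ?thesis using Some True by (simp add: Wf_Suc Fop_Some1 gd_punit_add)
    next
      case False
      let ?S = "Wf i ` {t. (Some s, t) \<in> \<sigma>}"
      have "\<forall>x\<in>?S. gd x" using Suc.IH succ0_sub by blast
      then have "gd (pmax ?S)" using pmax_prop[of ?S] succ0_fin succ0_ne[OF s False] by auto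
      then show ?thesis using Some False by (simp add: Wf_Suc Fop_Some0 gd_punit_add)
    qed
  qed
qed

lemma Wf_mono: "x \<in> AA \<Longrightarrow> pleq (Wf (Suc i) x) (Wf i x)"
proof (induction i arbitrary: x)
  case 0
  then show ?case by (cases x) (auto simp: Wf_0 Vbot_def)
next
  case (Suc i)
  show ?case
  proof (cases x)
    case None then show ?thesis by simp
  next
    case (Some s)
    then have s: "s \<in> V" using Suc.prems by auto
    show ?thesis
    proof (cases "own s = 1")
      case True
      have "pleq (pmin ((\<lambda>t. Wf (Suc i) (Some t)) ` {t. (s, t) \<in> E}))
                 (pmin ((\<lambda>t. Wf i (Some t)) ` {t. (s, t) \<in> E}))"
      proof (rule pmin_mono[OF succ1_fin succ1_ne[OF s]], intro ballI conjI)
        fix t assume "t \<in> {t. (s, t) \<in> E}"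
        then have "Some t \<in> AA" using succ1_V by blast
        then show "gd (Wf (Suc i) (Some t))" "gd (Wf i (Some t))" "pleq (Wf (Suc i) (Some t)) (Wf i (Some t))"
          using Wf_gd Suc.IH by auto
      qed
      then show ?thesis using Some True by (simp add: Wf_Suc[of "Suc i"] Wf_Suc[of i] Fop_Some1 punit_mono)
    next
      case False
      have "pleq (pmax (Wf (Suc i) ` {t. (Some s, t) \<in> \<sigma>}))
                 (pmax (Wf i ` {t. (Some s, t) \<in> \<sigma>}))"
      proof (rule pmax_mono[OF succ0_fin succ0_ne[OF s False]], intro ballI conjI)
        fix t assume "t \<in> {t. (Some s, t) \<in> \<sigma>}"
        then have "t \<in> AA" using succ0_sub by blast
        then show "gd (Wf (Suc i) t)" "gd (Wf i t)" "pleq (Wf (Suc i) t) (Wf i t)"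
          using Wf_gd Suc.IH by auto
      qed
      then show ?thesis using Some False by (simp add: Wf_Suc[of "Suc i"] Wf_Suc[of i] Fop_Some0 punit_mono)
    qed
  qed
qed

end


context arena begin

definition Qp :: "('v option \<times> 'v option) set \<Rightarrow> nat \<Rightarrow> 'v \<Rightarrow> bool" where
  "Qp \<tau> i s \<longleftrightarrow> (\<exists>xs. walk (\<sigma> \<union> \<tau>) xs \<and> hd xs = Some s \<and> length xs = Suc i \<and> set xs \<subseteq> Some ` V)
     \<or> (\<exists>xs. walk (\<sigma> \<union> \<tau>) xs \<and> hd xs = Some s \<and> (\<forall>y. (last xs, y) \<notin> \<sigma> \<union> \<tau>)
            \<and> pleq (Wf i (Some s)) (prof_path c xs))"

lemma Q_lemma:
  assumes \<tau>: "strategy1 V E own \<tau>"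
  shows "\<forall>s\<in>V. Qp \<tau> i s"
proof (induction i)
  case 0
  show ?case
  proof
    fix s assume "s \<in> V"
    then have "walk (\<sigma> \<union> \<tau>) [Some s] \<and> hd [Some s] = Some s \<and> length [Some s] = Suc 0 \<and> set [Some s] \<subseteq> Some ` V"
      by simp
    then show "Qp \<tau> 0 s" unfolding Qp_def by blast
  qed
next
  case (Suc i)
  have Gs: "\<sigma> \<union> \<tau> \<subseteq> \<sigma> \<union> E1 V E own" using tau_sub[OF \<tau>] .
  show ?case
  proof
    fix s assume s: "s \<in> V"
    obtain t0 where t0: "(Some s, t0) \<in> \<sigma> \<union> \<tau>"
      and bd: "pleq (Wf (Suc i) (Some s)) (padd (punit (c s)) (Wf i t0))"
    proof (cases "own s = 1")
      case True
      then obtain y where y: "(Some s, y) \<in> \<tau>" using \<tau> s unfolding strategy1_def by blast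
      then have "(Some s, y) \<in> E1 V E own" using \<tau> unfolding strategy1_def by blast
      then obtain b where b: "y = Some b" "(s, b) \<in> E" using E1_edge by blast
      let ?S = "(\<lambda>t. Wf i (Some t)) ` {t. (s, t) \<in> E}"
      have "\<forall>x\<in>?S. gd x" using Wf_gd succ1_V by blast
      then have "pleq (pmin ?S) (Wf i (Some b))" using pmin_prop[of ?S] succ1_fin succ1_ne[OF s] b by auto
      then have "pleq (Wf (Suc i) (Some s)) (padd (punit (c s)) (Wf i y))"
        using True b by (simp add: Wf_Suc Fop_Some1 punit_mono)
      then show ?thesis using that y by blast
    next
      case False
      let ?S = "Wf i ` {t. (Some s, t) \<in> \<sigma>}"
      have "\<forall>x\<in>?S. gd x" using Wf_gd succ0_sub by blast
      then have "pmax ?S \<in> ?S" using pmax_prop[of ?S] succ0_fin succ0_ne[OF s False] by auto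
      then obtain y where y: "(Some s, y) \<in> \<sigma>" "pmax ?S = Wf i y" by auto
      then have "pleq (Wf (Suc i) (Some s)) (padd (punit (c s)) (Wf i y))"
        using False by (simp add: Wf_Suc Fop_Some0)
      then show ?thesis using that y by blast
    qed
    have t0A: "t0 \<in> AA" using G_edge t0 Gs by blast
    show "Qp \<tau> (Suc i) s"
    proof (cases t0)
      case None
      have "walk (\<sigma> \<union> \<tau>) [Some s, None]" using t0 None by (simp add: walk_Cons)
      moreover have "\<forall>y. (last [Some s, None], y) \<notin> \<sigma> \<union> \<tau>" using no_None_edge[OF Gs] by simp
      moreover have "prof_path c [Some s, None] = padd (punit (c s)) (Wf i t0)"
        using None by (simp add: punit_def pzero_def)
      ultimately show ?thesis using bd unfolding Qp_def by (metis list.sel(1))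
    next
      case (Some t)
      then have tV: "t \<in> V" using t0A by auto
      have "Qp \<tau> i t" using Suc.IH tV by blast
      then consider (A) "\<exists>xs. walk (\<sigma> \<union> \<tau>) xs \<and> hd xs = Some t \<and> length xs = Suc i \<and> set xs \<subseteq> Some ` V"
        | (B) "\<exists>xs. walk (\<sigma> \<union> \<tau>) xs \<and> hd xs = Some t \<and> (\<forall>y. (last xs, y) \<notin> \<sigma> \<union> \<tau>)
            \<and> pleq (Wf i (Some t)) (prof_path c xs)" unfolding Qp_def by blast
      then show ?thesis
      proof cases
        case A
        then obtain xs where xs: "walk (\<sigma> \<union> \<tau>) xs" "hd xs = Some t" "length xs = Suc i" "set xs \<subseteq> Some ` V" by blast
        then obtain r where r: "xs = Some t # r" by (cases xs) auto
        have "walk (\<sigma> \<union> \<tau>) (Some s # xs)" using xs r t0 Some by (simp add: walk_Cons)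
        moreover have "set (Some s # xs) \<subseteq> Some ` V" using xs s by auto
        ultimately show ?thesis using xs(3) unfolding Qp_def by (metis length_Cons list.sel(1))
      next
        case B
        then obtain xs where xs: "walk (\<sigma> \<union> \<tau>) xs" "hd xs = Some t" "\<forall>y. (last xs, y) \<notin> \<sigma> \<union> \<tau>"
            "pleq (Wf i (Some t)) (prof_path c xs)" by blast
        then obtain r where r: "xs = Some t # r" by (cases xs) (auto simp: walk_def)
        have w: "walk (\<sigma> \<union> \<tau>) (Some s # xs)" using xs r t0 Some by (simp add: walk_Cons)
        have l: "last (Some s # xs) = last xs" using r by simp
        have "pleq (padd (punit (c s)) (Wf i t0)) (prof_path c (Some s # xs))"
          using xs(4) Some by (simp add: punit_mono)
        then have "pleq (Wf (Suc i) (Some s)) (prof_path c (Some s # xs))"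
          using pleq_trans[OF _ _ _ bd] Wf_gd[of "Some s"] s Wf_gd[OF t0A] gd_punit_add by auto
        then show ?thesis using w l xs(3) unfolding Qp_def by (metis list.sel(1))
      qed
    qed
  qed
qed

lemma dir1:
  assumes \<tau>: "strategy1 V E own \<tau>" and s: "s \<in> V" and i: "card V \<le> i"
  shows "pleq (Wf i (Some s)) (pmax (play_profs c (\<sigma> \<union> \<tau>) (Some s)))"
proof -
  let ?S = "play_profs c (\<sigma> \<union> \<tau>) (Some s)"
  have Gs: "\<sigma> \<union> \<tau> \<subseteq> \<sigma> \<union> E1 V E own" using tau_sub[OF \<tau>] .
  have M: "pmax ?S \<in> ?S \<and> (\<forall>x\<in>?S. pleq x (pmax ?S)) \<and> gd (pmax ?S)" using M_prop[OF \<tau> s] .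
  have "Qp \<tau> i s" using Q_lemma[OF \<tau>, of i] s by blast
  then consider (A) "\<exists>xs. walk (\<sigma> \<union> \<tau>) xs \<and> hd xs = Some s \<and> length xs = Suc i \<and> set xs \<subseteq> Some ` V"
    | (B) "\<exists>xs. walk (\<sigma> \<union> \<tau>) xs \<and> hd xs = Some s \<and> (\<forall>y. (last xs, y) \<notin> \<sigma> \<union> \<tau>)
            \<and> pleq (Wf i (Some s)) (prof_path c xs)" unfolding Qp_def by blast
  then show ?thesis
  proof cases
    case A
    then obtain xs where xs: "walk (\<sigma> \<union> \<tau>) xs" "hd xs = Some s" "length xs = Suc i" "set xs \<subseteq> Some ` V" by blast
    have "card (Some ` V) < length xs" using xs(3) i card_image_le[OF finV, of Some] by simp
    then obtain j k where "j < k" "k < length xs" "xs ! j = xs ! k"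
      using pigeon[of "Some ` V" xs] finV xs(4) by blast
    then obtain \<omega> where om: "\<omega> 0 = Some s" "infpath (\<sigma> \<union> \<tau>) \<omega>" using pump[OF xs(1)] xs(2) by metis
    have "wins0 c \<omega>" using inf_wins[OF Gs om(2)] .
    then have "PosInf \<in> ?S" unfolding play_profs_eq using om by force
    then show ?thesis using pmax_PosInf by simp
  next
    case B
    then obtain xs where xs: "walk (\<sigma> \<union> \<tau>) xs" "hd xs = Some s" "\<forall>y. (last xs, y) \<notin> \<sigma> \<union> \<tau>"
            "pleq (Wf i (Some s)) (prof_path c xs)" by blast
    have "prof_path c xs \<in> ?S" unfolding play_profs_eq using xs by blast
    then have "pleq (prof_path c xs) (pmax ?S)" using M by blast
    then show ?thesis using pleq_trans[OF _ _ _ xs(4)] Wf_gd[of "Some s"] s M by auto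
  qed
qed

end


lemma padd_pzero_right: "gd x \<Longrightarrow> x \<noteq> PosInf \<Longrightarrow> padd x pzero = x"
  by (cases x) (auto simp: pzero_def)

lemma walk_map_upt: "infpath G \<omega> \<Longrightarrow> a < b \<Longrightarrow> walk G (map \<omega> [a..<b])"
  unfolding walk_def infpath_def by auto

lemma map_upt_Suc_parts:
  assumes "a \<le> b"
  shows "hd (map \<omega> [a..<Suc b]) = \<omega> a" "last (map \<omega> [a..<Suc b]) = \<omega> b"
    "butlast (map \<omega> [a..<Suc b]) = map \<omega> [a..<b]"
proof -
  show "hd (map \<omega> [a..<Suc b]) = \<omega> a" using assms by (simp add: upt_rec[of a "Suc b"] del: upt_Suc)
  show "last (map \<omega> [a..<Suc b]) = \<omega> b" "butlast (map \<omega> [a..<Suc b]) = map \<omega> [a..<b]"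
    using assms by (auto simp: upt_Suc)
qed

context arena begin

lemma cycle_even:
  assumes G: "G \<subseteq> \<sigma> \<union> E1 V E own" and om: "infpath G \<omega>" and jk: "j < k" "\<omega> j = \<omega> k"
  shows "even (Max (c ` set (map (\<lambda>x. the (\<omega> x)) [j..<k])))"
proof -
  define \<nu> where "\<nu> i = the (\<omega> i)" for i
  have \<omega>\<nu>: "\<omega> i = Some (\<nu> i)" for i
    using infpath_Some[OF G om, of i] unfolding \<nu>_def by auto
  define L where "L = k - j"
  have L0: "L > 0" using jk L_def by auto
  define ws where "ws = map \<nu> [j..<k]"
  have lws: "length ws = L" unfolding ws_def L_def by simp
  have wsi: "i < L \<Longrightarrow> ws ! i = \<nu> (j + i)" for i unfolding ws_def L_def by simp
  have cyc: "is_cycle (\<sigma> \<union> E1 V E own) ws"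
    unfolding is_cycle_def
  proof (intro conjI allI impI)
    show "ws \<noteq> []" using lws L0 by auto
  next
    fix i assume "i < length ws"
    then have iL: "i < L" using lws by simp
    have e: "(\<omega> (j + i), \<omega> (Suc (j + i))) \<in> G" using om unfolding infpath_def by blast
    then have e': "(Some (\<nu> (j + i)), Some (\<nu> (Suc (j + i)))) \<in> \<sigma> \<union> E1 V E own"
      using G unfolding \<omega>\<nu> by blast
    have w1: "ws ! i = \<nu> (j + i)" using wsi[OF iL] .
    show "(Some (ws ! i), Some (ws ! ((i + 1) mod length ws))) \<in> \<sigma> \<union> E1 V E own"
    proof (cases "i + 1 < L")
      case True
      then have "(i + 1) mod length ws = i + 1" using lws by simp
      moreover have "ws ! (i + 1) = \<nu> (Suc (j + i))" using wsi[OF True] by simp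
      ultimately show ?thesis using e' w1 by simp
    next
      case False
      then have "i + 1 = L" using iL by simp
      then have "(i + 1) mod length ws = 0" "Suc (j + i) = k" using lws L_def jk by auto
      moreover have "\<nu> j = \<nu> k" using jk(2) unfolding \<nu>_def by simp
      moreover have "ws ! 0 = \<nu> j" using wsi[OF L0] by simp
      ultimately show ?thesis using e' w1 by simp
    qed
  qed
  have "\<not> odd (Max (c ` set ws))" using reas cyc unfolding reasonable_def by blast
  then show ?thesis unfolding ws_def \<nu>_def by simp
qed

end


context arena begin

lemma dir2:
  assumes s: "s \<in> V"
  shows "\<exists>\<tau>. strategy1 V E own \<tau> \<and> pleq (pmax (play_profs c (\<sigma> \<union> \<tau>) (Some s))) (Wf (Suc j) (Some s))"
proof -
  define PM where "PM a = pmin ((\<lambda>t. Wf j (Some t)) ` {t. (a, t) \<in> E})" for a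
  have PMex: "\<exists>t. (a, t) \<in> E \<and> Wf j (Some t) = PM a" if a: "a \<in> V" for a
  proof -
    let ?S = "(\<lambda>t. Wf j (Some t)) ` {t. (a, t) \<in> E}"
    have "\<forall>x\<in>?S. gd x"
    proof
      fix x assume "x \<in> ?S"
      then obtain t where "(a, t) \<in> E" "x = Wf j (Some t)" by blast
      then show "gd x" using Wf_gd EV by blast
    qed
    then have "PM a \<in> ?S" using pmin_prop[of ?S] succ1_fin succ1_ne[OF a] unfolding PM_def by auto
    then show ?thesis by auto
  qed
  define g where "g a = (SOME t. (a, t) \<in> E \<and> Wf j (Some t) = PM a)" for a
  have gP: "(a, g a) \<in> E \<and> Wf j (Some (g a)) = PM a" if "a \<in> V" for a
    unfolding g_def using someI_ex[OF PMex[OF that]] .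
  define \<tau> where "\<tau> = {(Some a, Some (g a)) | a. a \<in> V \<and> own a = 1}"
  have st: "strategy1 V E own \<tau>"
    unfolding strategy1_def
  proof
    show "\<tau> \<subseteq> E1 V E own"
    proof
      fix e assume "e \<in> \<tau>"
      then obtain a where a: "e = (Some a, Some (g a))" "a \<in> V" "own a = 1" unfolding \<tau>_def by blast
      then show "e \<in> E1 V E own" using gP[OF a(2)] unfolding E1_def by blast
    qed
    show "\<forall>s\<in>V. own s = 1 \<longrightarrow> (\<exists>t. (Some s, t) \<in> \<tau>)" unfolding \<tau>_def by blast
  qed
  define H where "H = \<sigma> \<union> \<tau>"
  have Hs: "H \<subseteq> \<sigma> \<union> E1 V E own" using tau_sub[OF st] H_def by simp
  define W where "W = Wf (Suc j)"
  have Wgd: "x \<in> AA \<Longrightarrow> gd (W x)" for x unfolding W_def using Wf_gd .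
  have KI: "\<exists>a. x = Some a \<and> a \<in> V \<and> pleq (padd (punit (c a)) (W y)) (W x)" if e: "(x, y) \<in> H" for x y
  proof -
    from e have "(x, y) \<in> \<sigma> \<or> (x, y) \<in> \<tau>" unfolding H_def by blast
    then show ?thesis
    proof
      assume xy: "(x, y) \<in> \<sigma>"
      then obtain a where a: "a \<in> V" "x = Some a" "own a = 0" "y \<in> AA" using sigma_edge by blast
      let ?S = "Wf j ` {t. (Some a, t) \<in> \<sigma>}"
      have Sgd: "\<forall>z\<in>?S. gd z" using Wf_gd succ0_sub by blast
      have ne: "own a \<noteq> 1" using a by simp
      have Pm: "pmax ?S \<in> ?S \<and> (\<forall>z\<in>?S. pleq z (pmax ?S))"
        using pmax_prop[of ?S] succ0_fin succ0_ne[OF a(1) ne] Sgd by auto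
      have "Wf j y \<in> ?S" using xy a by blast
      then have "pleq (Wf j y) (pmax ?S)" using Pm by blast
      moreover have "pleq (W y) (Wf j y)" unfolding W_def using Wf_mono[OF a(4)] .
      moreover have "gd (pmax ?S)" using Pm Sgd by blast
      ultimately have "pleq (W y) (pmax ?S)" using pleq_trans Wgd[OF a(4)] Wf_gd[OF a(4)] by blast
      then have "pleq (padd (punit (c a)) (W y)) (padd (punit (c a)) (pmax ?S))" by (rule punit_mono)
      moreover have "W x = padd (punit (c a)) (pmax ?S)" unfolding W_def Wf_Suc using a ne Fop_Some0 by simp
      ultimately show ?thesis using a by auto
    next
      assume "(x, y) \<in> \<tau>"
      then obtain a where a: "x = Some a" "y = Some (g a)" "a \<in> V" "own a = 1" unfolding \<tau>_def by blast
      have yA: "y \<in> AA" using gP[OF a(3)] EV a(2) by blast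
      have "pleq (W y) (Wf j y)" unfolding W_def using Wf_mono[OF yA] .
      then have "pleq (padd (punit (c a)) (W y)) (padd (punit (c a)) (Wf j y))" by (rule punit_mono)
      moreover have "W x = padd (punit (c a)) (Wf j y)"
        unfolding W_def Wf_Suc using a Fop_Some1 gP[OF a(3)] PM_def by simp
      ultimately show ?thesis using a by auto
    qed
  qed
  have tele: "\<forall>xs. walk H xs \<longrightarrow> hd xs \<in> AA \<longrightarrow>
      pleq (padd (prof_path c (butlast xs)) (W (last xs))) (W (hd xs))"
  proof
    fix xs show "walk H xs \<longrightarrow> hd xs \<in> AA \<longrightarrow>
      pleq (padd (prof_path c (butlast xs)) (W (last xs))) (W (hd xs))"
    proof (induction xs)
      case Nil then show ?case by (simp add: walk_def)
    next
      case (Cons x xs)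
      note IH0 = Cons.IH
      show ?case
      proof (cases xs)
        case Nil then show ?thesis by simp
      next
        case (Cons y ys)
        show ?thesis
        proof (intro impI)
          assume w: "walk H (x # xs)" and hA: "hd (x # xs) \<in> AA"
          have exy: "(x, y) \<in> H" and wy: "walk H (y # ys)" using w Cons by (simp_all add: walk_Cons)
          obtain a where a: "x = Some a" "a \<in> V" "pleq (padd (punit (c a)) (W y)) (W x)"
            using KI[OF exy] by blast
          have yA: "y \<in> AA" using G_edge exy Hs by blast
          have IH: "pleq (padd (prof_path c (butlast xs)) (W (last xs))) (W y)"
          proof -
            have "walk H xs" "hd xs \<in> AA" using wy yA \<open>xs = y # ys\<close> by simp_all
            then have "pleq (padd (prof_path c (butlast xs)) (W (last xs))) (W (hd xs))" using IH0 by blast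
            then show ?thesis using \<open>xs = y # ys\<close> by simp
          qed
          have "set xs \<subseteq> AA" using walk_set[OF Hs wy] yA \<open>xs = y # ys\<close> by simp
          moreover have "last xs \<in> set xs" using \<open>xs = y # ys\<close> last_in_set by blast
          ultimately have lA: "last xs \<in> AA" by blast
          obtain f where f: "prof_path c (butlast xs) = Fin f" "finite {i. f i \<noteq> 0}" using prof_Fin by blast
          have g1: "gd (padd (prof_path c (butlast xs)) (W (last xs)))"
            using gd_padd[OF f(2) Wgd[OF lA]] f(1) by simp
          have "pleq (padd (punit (c a)) (padd (prof_path c (butlast xs)) (W (last xs))))
                     (padd (punit (c a)) (W y))" using IH by (rule punit_mono)
          then have "pleq (padd (punit (c a)) (padd (prof_path c (butlast xs)) (W (last xs)))) (W x)"
            using pleq_trans[OF gd_punit_add[OF g1] gd_punit_add[OF Wgd[OF yA]] Wgd _ a(3)] a by auto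
          moreover have "butlast (x # xs) = x # butlast xs" "last (x # xs) = last xs" using Cons by auto
          moreover have "padd (prof_path c (Some a # butlast xs)) (W (last xs)) =
              padd (punit (c a)) (padd (prof_path c (butlast xs)) (W (last xs)))"
            by (simp only: prof_cons_assoc option.case)
          ultimately show "pleq (padd (prof_path c (butlast (x # xs))) (W (last (x # xs)))) (W (hd (x # xs)))"
            using a(1) by (simp del: prof_Some)
        qed
      qed
    qed
  qed
  have "pleq (pmax (play_profs c H (Some s))) (W (Some s))"
  proof (cases "W (Some s) = PosInf")
    case True then show ?thesis by simp
  next
    case False
    then obtain aa where Wa: "W (Some s) = Fin aa" using Wgd[of "Some s"] s by (cases "W (Some s)") auto
    have noinf: "\<not> (\<exists>\<omega>. \<omega> 0 = Some s \<and> infpath H \<omega>)"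
    proof
      assume "\<exists>\<omega>. \<omega> 0 = Some s \<and> infpath H \<omega>"
      then obtain \<omega> where om: "\<omega> 0 = Some s" "infpath H \<omega>" by blast
      define zs where "zs = map \<omega> [0..<Suc (card V)]"
      have "set zs \<subseteq> Some ` V" unfolding zs_def using infpath_Some[OF Hs om(2)] by auto
      moreover have "card (Some ` V) < length zs" unfolding zs_def using card_image_le[OF finV, of Some] by simp
      ultimately obtain j' k' where jk: "j' < k'" "k' < length zs" "zs ! j' = zs ! k'"
        using pigeon[of "Some ` V" zs] finV by blast
      then have jk': "\<omega> j' = \<omega> k'" unfolding zs_def by (simp del: upt_Suc)
      have w1: "walk H (map \<omega> [0..<Suc j'])" using walk_map_upt[OF om(2), of 0 "Suc j'"] by simp
      have p1: "pleq (padd (prof_path c (map \<omega> [0..<j'])) (W (\<omega> j'))) (Fin aa)"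
        using tele w1 map_upt_Suc_parts[of 0 j' \<omega>] om(1) s Wa by auto
      have jA: "\<omega> j' \<in> AA" using infpath_Some[OF Hs om(2)] by blast
      obtain f where f: "prof_path c (map \<omega> [0..<j']) = Fin f" using prof_Fin by blast
      obtain bb where Wb: "W (\<omega> j') = Fin bb"
      proof (cases "W (\<omega> j')")
        case NegInf then show ?thesis using Wgd[OF jA] by simp
      next
        case PosInf then show ?thesis using p1 f by (simp add: pleq_PosInf_iff)
      next
        case (Fin b) then show ?thesis using that by simp
      qed
      have w2: "walk H (map \<omega> [j'..<Suc k'])" using walk_map_upt[OF om(2), of j' "Suc k'"] jk by simp
      have p2: "pleq (padd (prof_path c (map \<omega> [j'..<k'])) (W (\<omega> k'))) (W (\<omega> j'))"
        using tele w2 map_upt_Suc_parts[of j' k' \<omega>] jk jA by auto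
      define ws where "ws = map (\<lambda>x. the (\<omega> x)) [j'..<k']"
      have mws: "map \<omega> [j'..<k'] = map Some ws"
      proof -
        have om_eq: "(\<lambda>x. Some (the (\<omega> x))) = \<omega>"
        proof
          fix x show "Some (the (\<omega> x)) = \<omega> x" using infpath_Some[OF Hs om(2), of x] by auto
        qed
        show ?thesis unfolding ws_def map_map o_def om_eq ..
      qed
      have "ws \<noteq> []" unfolding ws_def using jk by simp
      moreover have "even (Max (c ` set ws))" unfolding ws_def using cycle_even[OF Hs om(2) jk(1) jk'] .
      ultimately have pos: "pless pzero (prof_path c (map Some ws))" by (rule positive_cycle)
      obtain p where p: "prof_path c (map Some ws) = Fin p" using prof_Fin by blast
      have "pleq (padd (Fin p) (Fin bb)) (Fin bb)" using p2 mws p Wb jk' by simp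
      then show False using no_pos_fix pos p by simp
    qed
    have M: "pmax (play_profs c H (Some s)) \<in> play_profs c H (Some s)"
      using M_prop[OF st s] H_def by simp
    then obtain xs where xs: "pmax (play_profs c H (Some s)) = prof_path c xs" "walk H xs"
      "hd xs = Some s" "\<forall>y. (last xs, y) \<notin> H"
      using noinf unfolding play_profs_eq by blast
    have sA: "Some s \<in> AA" using s by simp
    have "set xs \<subseteq> AA" using walk_set[OF Hs xs(2)] xs(3) sA by simp
    moreover have "xs \<noteq> []" using xs(2) by (simp add: walk_def)
    ultimately have "last xs \<in> AA" using last_in_set by blast
    moreover have "last xs \<notin> Some ` V"
    proof
      assume "last xs \<in> Some ` V"
      then obtain v where v: "v \<in> V" "last xs = Some v" by blast
      then obtain y where "(Some v, y) \<in> \<sigma> \<union> \<tau>" using G_succ[OF st] by blast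
      then show False using xs(4) v(2) H_def by simp
    qed
    ultimately have lN: "last xs = None" by blast
    have xne: "xs \<noteq> []" using xs(2) by (simp add: walk_def)
    have "xs = butlast xs @ [None]" using append_butlast_last_id[OF xne] lN by simp
    then have pe: "prof_path c xs = prof_path c (butlast xs)" by (metis prof_snoc_None)
    have "pleq (padd (prof_path c (butlast xs)) (W (last xs))) (W (hd xs))"
      using tele xs(2) xs(3) sA by blast
    moreover obtain f where f: "prof_path c (butlast xs) = Fin f" using prof_Fin by blast
    ultimately show ?thesis using lN xs(1,3) pe by (simp add: pzero_def W_def)
  qed
  then show ?thesis using st unfolding H_def W_def by blast
qed

end


lemma E1_finite: "finite E \<Longrightarrow> finite (E1 V E own)"
proof -
  assume fE: "finite E"
  have "E1 V E own \<subseteq> (\<lambda>(a, b). (Some a, Some b)) ` E" unfolding E1_def by auto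
  then show ?thesis using fE finite_subset by blast
qed

theorem mainTheorem7:
  fixes V :: "'v set" and E :: "('v \<times> 'v) set" and own :: "'v \<Rightarrow> nat"
    and c :: "'v \<Rightarrow> nat" and d :: nat and \<sigma> :: "('v option \<times> 'v option) set"
  assumes "finite V"
    and "E \<subseteq> V \<times> V"
    and "\<forall>v\<in>V. \<exists>w. (v, w) \<in> E"
    and "\<forall>v\<in>V. own v \<in> {0, 1}"
    and "\<forall>v\<in>V. c v < d"
    and "strategy0 V E own \<sigma>"
    and "reasonable V E own c \<sigma>"
  shows "\<forall>i \<ge> card V. \<forall>x \<in> insert None (Some ` V).
           ((Fop E own c \<sigma>) ^^ i) Vbot x = valuation V E own c \<sigma> x"
proof -
  interpret arena V E own c \<sigma>
    by unfold_locales (use assms in auto)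
  have fE: "finite E" using assms(1,2) finite_subset by blast
  show ?thesis
  proof (intro allI impI ballI)
    fix i x assume i: "card V \<le> i" and x: "x \<in> insert None (Some ` V)"
    show "((Fop E own c \<sigma>) ^^ i) Vbot x = valuation V E own c \<sigma> x"
    proof (cases x)
      case None
      then show ?thesis using Wf_None[of i] unfolding Wf_def by (simp add: valuation_def)
    next
      case (Some s)
      then have s: "s \<in> V" using x by auto
      define M where "M \<tau> = pmax (play_profs c (\<sigma> \<union> \<tau>) (Some s))" for \<tau>
      define T where "T = {M \<tau> | \<tau>. strategy1 V E own \<tau>}"
      have val: "valuation V E own c \<sigma> x = pmin T" unfolding T_def M_def valuation_def Some by simp
      have "card V \<noteq> 0" using s assms(1) by auto
      then obtain j where ij: "i = Suc j" using i by (cases i) auto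
      obtain \<tau>0 where t0: "strategy1 V E own \<tau>0" "pleq (M \<tau>0) (Wf (Suc j) (Some s))"
        using dir2[OF s, of j] unfolding M_def by blast
      have Tim: "T = M ` {\<tau>. strategy1 V E own \<tau>}" unfolding T_def by auto
      have "{\<tau>. strategy1 V E own \<tau>} \<subseteq> Pow (E1 V E own)" unfolding strategy1_def by auto
      then have "finite {\<tau>. strategy1 V E own \<tau>}" using E1_finite[OF fE] finite_subset by blast
      then have Tfin: "finite T" using Tim by simp
      have Tne: "T \<noteq> {}" using t0(1) unfolding T_def by blast
      have Tgd: "\<forall>z\<in>T. gd z" unfolding T_def M_def using M_prop[OF _ s] by blast
      have P: "pmin T \<in> T" "\<forall>z\<in>T. pleq (pmin T) z" using pmin_prop[OF Tfin Tne Tgd] by auto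
      then obtain \<tau>1 where t1: "strategy1 V E own \<tau>1" "pmin T = M \<tau>1" unfolding T_def by blast
      have up: "pleq (Wf i (Some s)) (pmin T)" using dir1[OF t1(1) s i] t1(2) unfolding M_def by simp
      have "M \<tau>0 \<in> T" using t0(1) unfolding T_def by blast
      then have "pleq (pmin T) (M \<tau>0)" using P by blast
      moreover have "gd (pmin T)" "gd (M \<tau>0)" using P(1) Tgd \<open>M \<tau>0 \<in> T\<close> by auto
      moreover have "gd (Wf i (Some s))" using Wf_gd s by simp
      ultimately have lo: "pleq (pmin T) (Wf i (Some s))" using pleq_trans t0(2) ij by blast
      have "Wf i (Some s) = pmin T" using pleq_antisym[OF up lo] .
      then show ?thesis using val Some unfolding Wf_def by simp
    qed
  qed
qed



end
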